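(* Let $G=(V,E,\ell,\Phi)$ be a strongly connected trackable weak model. Let $(X_t)_{t\ge0}$ be a Markov chain on $V$ with arbitrary initial distribution and transition matrix $P$ satisfying $P_{ij}>0$ if and only if $(i,j)\in E$. Then, almost surely, for every $s\ge 0$ there exists $N>s$ such that every walk $(y_0,y_1,\dots,y_N)$ in $G$ with $y_0=X_0$ and $\ell(y_i)=\ell(X_i)$ for all $0\le i\le N$ satisfies $y_{s+1}=X_{s+1}$. In words: when the starting node is known, whenever the chain passes through a node with same-colored out-neighbors, it eventually becomes possible to identify from the observed colors which branch was taken.
   Context: A (single-colored) weak model $G=(V,E,\ell,\Phi)$ consists of a finite set of nodes $V$, directed edges $E\subseteq V\times V$, a finite color set $\Phi$ and a coloring $\ell:V\to\Phi$. A walk is a node sequence with consecutive nodes joined by edges of $E$. For $Y_{[t]}\in\Phi^t$, $\mathcal H_G(Y_{[t]})$ is the set of walks $(x_1,\dots,x_t)$ with $\ell(x_i)=Y_i$ for all $i$, and $n_G(t)=\max_{Y_{[t]}}|\mathcal H_G(Y_{[t]})|$. $G$ is trackable if $n_G(t)=O(t^k)$ for some $k\ge0$, and strongly connected if every node is reachable from every node by a directed path. Two distinct nodes $v_1,v_2$ are same-colored out-neighbors of $v$ if $(v,v_1),(v,v_2)\in E$ and $\ell(v_1)=\ell(v_2)$. *)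

theory Defs
  imports "HOL-Probability.Probability" "HOL-Library.Landau_Symbols"
begin

definition weak_model :: "'v set \<Rightarrow> ('v \<times> 'v) set \<Rightarrow> ('v \<Rightarrow> 'c) \<Rightarrow> 'c set \<Rightarrow> bool" where
  "weak_model V E l Phi \<longleftrightarrow> finite V \<and> E \<subseteq> V \<times> V \<and> finite Phi \<and> l ` V \<subseteq> Phi"

definition is_walk :: "'v set \<Rightarrow> ('v \<times> 'v) set \<Rightarrow> 'v list \<Rightarrow> bool" where
  "is_walk V E xs \<longleftrightarrow> set xs \<subseteq> V \<and> (\<forall>i. Suc i < length xs \<longrightarrow> (xs ! i, xs ! Suc i) \<in> E)"

definition walks_of_colors :: "'v set \<Rightarrow> ('v \<times> 'v) set \<Rightarrow> ('v \<Rightarrow> 'c) \<Rightarrow> 'c list \<Rightarrow> 'v list set" where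
  "walks_of_colors V E l Y = {xs. is_walk V E xs \<and> length xs = length Y \<and> (\<forall>i < length Y. l (xs ! i) = Y ! i)}"

definition n_G :: "'v set \<Rightarrow> ('v \<times> 'v) set \<Rightarrow> ('v \<Rightarrow> 'c) \<Rightarrow> 'c set \<Rightarrow> nat \<Rightarrow> nat" where
  "n_G V E l Phi t = Max {card (walks_of_colors V E l Y) | Y. length Y = t \<and> set Y \<subseteq> Phi}"

definition trackable :: "'v set \<Rightarrow> ('v \<times> 'v) set \<Rightarrow> ('v \<Rightarrow> 'c) \<Rightarrow> 'c set \<Rightarrow> bool" where
  "trackable V E l Phi \<longleftrightarrow> (\<exists>k::nat. (\<lambda>t. real (n_G V E l Phi t)) \<in> O(\<lambda>t. real t ^ k))"

definition strongly_connected :: "'v set \<Rightarrow> ('v \<times> 'v) set \<Rightarrow> bool" where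
  "strongly_connected V E \<longleftrightarrow> (\<forall>u\<in>V. \<forall>v\<in>V. (u, v) \<in> E\<^sup>*)"

definition markov_chain :: "'w measure \<Rightarrow> 'v set \<Rightarrow> ('v \<Rightarrow> 'v \<Rightarrow> real) \<Rightarrow> (nat \<Rightarrow> 'w \<Rightarrow> 'v) \<Rightarrow> bool" where
  "markov_chain M V P X \<longleftrightarrow>
     prob_space M \<and>
     (\<forall>t. X t \<in> measurable M (count_space UNIV)) \<and>
     (\<forall>t. \<forall>\<omega>\<in>space M. X t \<omega> \<in> V) \<and>
     (\<forall>i\<in>V. \<forall>j\<in>V. P i j \<ge> 0) \<and>
     (\<forall>i\<in>V. (\<Sum>j\<in>V. P i j) = 1) \<and>
     (\<forall>t (xs :: nat \<Rightarrow> 'v).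
        measure M {\<omega> \<in> space M. \<forall>i \<le> Suc t. X i \<omega> = xs i}
          = measure M {\<omega> \<in> space M. \<forall>i \<le> t. X i \<omega> = xs i} * P (xs t) (xs (Suc t)))"

end

theory Submission
  imports Defs
begin



lemma poly_exp_contra:
  fixes f :: "nat \<Rightarrow> nat"
  assumes O: "(\<lambda>t. real (f t)) \<in> O(\<lambda>t. real t ^ d)" and L: "L > 0"
    and lb: "\<And>k. 2 ^ k \<le> real (f (Suc (k*L)))"
  shows False
proof -
  from O obtain c where c: "c > 0" and ev: "eventually (\<lambda>t. norm (real (f t)) \<le> c * norm (real t ^ d)) at_top"
    by (elim landau_o.bigE)
  from ev obtain T where T: "\<And>t. t \<ge> T \<Longrightarrow> real (f t) \<le> c * real t ^ d"
    unfolding eventually_at_top_linorder by auto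
  define x where "x = root (Suc d) 2"
  have x1: "1 < x" unfolding x_def by (simp add: real_root_gt_1_iff)
  have xp: "x ^ Suc d = 2" unfolding x_def by (rule real_root_pow_pos2) auto
  have "(\<lambda>n. of_nat n / x^n) \<longlonglongrightarrow> (0::real)"
    by (rule lim_n_over_pown) (use x1 in simp)
  from tendsto_power[OF this, of "Suc d"]
  have "(\<lambda>n. (of_nat n / x^n) ^ Suc d) \<longlonglongrightarrow> (0::real)"
    by (simp del: power_Suc)
  moreover have "\<And>n. (of_nat n / x^n) ^ Suc d = real n ^ Suc d / 2 ^ n"
  proof -
    fix n
    have "(x^n) ^ Suc d = 2 ^ n"
      by (metis power_mult mult.commute xp)
    then show "(of_nat n / x^n) ^ Suc d = real n ^ Suc d / 2 ^ n"
      by (simp only: power_divide)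
  qed
  ultimately have lim: "(\<lambda>n. real n ^ Suc d / 2 ^ n) \<longlonglongrightarrow> 0" by simp
  define K where "K = c * real (L+1) ^ Suc d"
  have K: "K > 0" unfolding K_def using c by simp
  have "eventually (\<lambda>n. real n ^ Suc d / 2 ^ n < 1 / K) at_top"
    using lim K by (intro order_tendstoD) auto
  moreover have "eventually (\<lambda>n. n \<ge> max T 1) at_top" by (rule eventually_ge_at_top)
  ultimately have "eventually (\<lambda>n. real n ^ Suc d / 2 ^ n < 1 / K \<and> n \<ge> max T 1) at_top"
    by (rule eventually_conj)
  then obtain k where k1: "real k ^ Suc d / 2 ^ k < 1 / K" and k2: "k \<ge> max T 1"
    unfolding eventually_at_top_linorder by blast
  have "Suc (k*L) \<ge> T" 
  proof -
    have "k \<le> k*L" using L by simp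
    then show ?thesis using k2 by linarith
  qed
  then have "2 ^ k \<le> c * real (Suc (k*L)) ^ d" using lb[of k] T by (meson order.trans)
  also have "\<dots> \<le> c * real (k * (L+1)) ^ Suc d"
  proof -
    have a: "real (Suc (k*L)) \<le> real (k*(L+1))" using k2 by simp
    have b: "1 \<le> real (k*(L+1))" using k2 by (simp del: of_nat_mult add: one_le_mult_iff)
    have "real (Suc (k*L)) ^ d \<le> real (k*(L+1)) ^ d" by (rule power_mono[OF a]) simp
    also have "\<dots> \<le> real (k*(L+1)) ^ Suc d" using b by (simp add: power_increasing)
    finally show ?thesis using c by simp
  qed
  also have "\<dots> = K * real k ^ Suc d" unfolding K_def by (simp only: of_nat_mult power_mult_distrib mult_ac)
  also have "\<dots> < 2 ^ k" using k1 K by (simp add: field_simps)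
  finally show False by simp
qed




lemma all_nat_split: "(\<forall>i::nat. P i) \<longleftrightarrow> P 0 \<and> (\<forall>i. P (Suc i))"
  by (metis not0_implies_Suc)

locale G =
  fixes V :: "'v set" and E :: "('v\<times>'v) set"
begin

fun walk :: "'v list \<Rightarrow> bool" where
  "walk [] = True"
| "walk [x] = (x \<in> V)"
| "walk (x#y#xs) = (x \<in> V \<and> (x,y) \<in> E \<and> walk (y#xs))"

lemma is_walk_eq: "is_walk V E xs = walk xs"
proof (induction xs rule: walk.induct)
  case 1 then show ?case by (simp add: is_walk_def)
next
  case (2 x) then show ?case by (simp add: is_walk_def)
next
  case (3 x y xs)
  have "is_walk V E (x#y#xs) = (x \<in> V \<and> (x,y) \<in> E \<and> is_walk V E (y#xs))"
    unfolding is_walk_def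
    apply (subst all_nat_split)
    apply auto
    done
  then show ?case using 3 by simp
qed

lemma walk_Cons: "walk (x#xs) \<longleftrightarrow> x \<in> V \<and> (xs \<noteq> [] \<longrightarrow> (x, hd xs) \<in> E) \<and> walk xs"
  by (cases xs) auto

lemma walk_append: "walk (xs @ ys) \<longleftrightarrow> walk xs \<and> walk ys \<and> (xs \<noteq> [] \<and> ys \<noteq> [] \<longrightarrow> (last xs, hd ys) \<in> E)"
  by (induction xs rule: walk.induct) (auto simp: walk_Cons)

lemma walk_join: "walk u \<Longrightarrow> walk w \<Longrightarrow> u \<noteq> [] \<Longrightarrow> w \<noteq> [] \<Longrightarrow> last u = hd w \<Longrightarrow> walk (u @ tl w)"
  by (cases w) (auto simp: walk_append walk_Cons)

lemma walk_take: "walk xs \<Longrightarrow> walk (take n xs)"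
  by (metis append_take_drop_id walk_append)

lemma walk_drop: "walk xs \<Longrightarrow> walk (drop n xs)"
  by (metis append_take_drop_id walk_append)

lemma walk_set: "walk xs \<Longrightarrow> set xs \<subseteq> V"
  by (induction xs rule: walk.induct) auto

end



locale G2 = G V E for V :: "'v set" and E +
  fixes l :: "'v \<Rightarrow> 'c" and Phi :: "'c set"
  assumes wm: "weak_model V E l Phi" and sc: "strongly_connected V E"
    and tr: "trackable V E l Phi"
begin

lemma finV: "finite V" and EV: "E \<subseteq> V \<times> V" and finPhi: "finite Phi" and lV: "l ` V \<subseteq> Phi"
  using wm by (auto simp: weak_model_def)

lemma woc_eq: "walks_of_colors V E l Y = {xs. walk xs \<and> map l xs = Y}"
  unfolding walks_of_colors_def is_walk_eq
proof (rule Collect_cong)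
  fix xs
  have "(map l xs = Y) = (length xs = length Y \<and> (\<forall>i<length Y. l (xs ! i) = Y ! i))"
    by (auto simp: list_eq_iff_nth_eq)
  then show "(walk xs \<and> length xs = length Y \<and> (\<forall>i<length Y. l (xs ! i) = Y ! i)) = (walk xs \<and> map l xs = Y)"
    by simp
qed

lemma woc_finite: "finite (walks_of_colors V E l Y)"
proof -
  have "walks_of_colors V E l Y \<subseteq> {xs. set xs \<subseteq> V \<and> length xs = length Y}"
    unfolding woc_eq using walk_set by auto
  then show ?thesis using finite_lists_length_eq[OF finV] by (rule finite_subset)
qed

lemma nG_ge: "length Y = t \<Longrightarrow> set Y \<subseteq> Phi \<Longrightarrow> card (walks_of_colors V E l Y) \<le> n_G V E l Phi t"
  unfolding n_G_def
proof (rule Max_ge)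
  have "{card (walks_of_colors V E l Y) |Y. length Y = t \<and> set Y \<subseteq> Phi}
     = (\<lambda>Y. card (walks_of_colors V E l Y)) ` {Y. set Y \<subseteq> Phi \<and> length Y = t}" by auto
  then show "finite {card (walks_of_colors V E l Y) |Y. length Y = t \<and> set Y \<subseteq> Phi}"
    using finite_lists_length_eq[OF finPhi] by simp
qed auto

lemma path_exists:
  assumes "(u,v) \<in> E\<^sup>*" "u \<in> V"
  shows "\<exists>r. walk r \<and> r \<noteq> [] \<and> hd r = u \<and> last r = v"
  using assms(1)
proof (induction rule: rtrancl_induct)
  case base then show ?case using assms(2) by (intro exI[of _ "[u]"]) auto
next
  case (step y z)
  then obtain r where r: "walk r" "r \<noteq> []" "hd r = u" "last r = y" by blast
  have "z \<in> V" using step(2) EV by auto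
  then have "walk (r @ [z])" using r step(2) by (simp add: walk_append)
  then show ?case using r by (intro exI[of _ "r @ [z]"]) auto
qed

lemma path_ex: "u \<in> V \<Longrightarrow> v \<in> V \<Longrightarrow> \<exists>r. walk r \<and> r \<noteq> [] \<and> hd r = u \<and> last r = v"
  using path_exists sc unfolding strongly_connected_def by blast

lemma concat_inj:
  assumes "\<And>b. length (f b) = n" "f True \<noteq> f False"
  shows "length bs = length cs \<Longrightarrow> concat (map f bs) = concat (map f cs) \<Longrightarrow> bs = cs"
proof (induction bs arbitrary: cs)
  case Nil then show ?case by simp
next
  case (Cons b bs)
  then obtain c cs' where cs: "cs = c # cs'" by (cases cs) auto
  from Cons.prems have "f b @ concat (map f bs) = f c @ concat (map f cs')" by (simp add: cs)
  then have "f b = f c" "concat (map f bs) = concat (map f cs')"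
    using assms(1) by (auto simp: append_eq_append_conv)
  then have "b = c" using assms(2) by (cases b; cases c) auto
  moreover have "bs = cs'" using Cons.IH[of cs'] Cons.prems cs \<open>concat (map f bs) = _\<close> by simp
  ultimately show ?case by (simp add: cs)
qed

lemma two_loops:
  assumes a: "a \<in> V" and AB: "A \<noteq> B" "length A = length B" "map l A = map l B"
    and wA: "walk (a#A)" and wB: "walk (a#B)" and lA: "last (a#A) = a" and lB: "last (a#B) = a"
  shows "2 ^ k \<le> card (walks_of_colors V E l (l a # concat (replicate k (map l A))))"
proof -
  define f where "f b = (if b then A else B)" for b
  define blk where "blk bs = a # concat (map f bs)" for bs
  have w: "walk (blk bs)" for bs
  proof (induction bs)
    case Nil then show ?case using a by (simp add: blk_def)
  next
    case (Cons b bs)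
    have "walk (a # f b)" "last (a # f b) = a" using wA wB lA lB by (auto simp: f_def)
    from walk_join[OF this(1) Cons[unfolded blk_def]] this(2)
    show ?case by (simp add: blk_def)
  qed
  have c: "map l (blk bs) = l a # concat (replicate (length bs) (map l A))" for bs
    by (induction bs) (auto simp: blk_def f_def AB)
  have inj: "inj_on blk {bs. length bs = k}"
  proof (rule inj_onI)
    fix bs cs assume "bs \<in> {bs. length bs = k}" "cs \<in> {bs. length bs = k}" "blk bs = blk cs"
    then have "length bs = length cs" "concat (map f bs) = concat (map f cs)" by (auto simp: blk_def)
    moreover have "\<And>b. length (f b) = length A" "f True \<noteq> f False" using AB by (auto simp: f_def)
    ultimately show "bs = cs" using concat_inj by blast
  qed
  have "card (blk ` {bs. length bs = k}) = 2 ^ k"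
    using card_image[OF inj] card_lists_length_eq[of "UNIV :: bool set" k] by simp
  moreover have "blk ` {bs. length bs = k} \<subseteq> walks_of_colors V E l (l a # concat (replicate k (map l A)))"
    using w c unfolding woc_eq by auto
  ultimately show ?thesis using card_mono[OF woc_finite] by metis
qed

lemma no_diamond:
  assumes "walk ys" "walk zs" "ys \<noteq> []" "hd ys = hd zs" "last ys = last zs" "map l ys = map l zs"
  shows "ys = zs"
proof (rule ccontr)
  assume ne: "ys \<noteq> zs"
  have zne: "zs \<noteq> []" using assms by auto
  define a where "a = hd ys"
  have aV: "a \<in> V" using walk_set[OF assms(1)] assms(3) unfolding a_def by auto
  have bV: "last ys \<in> V" using walk_set[OF assms(1)] assms(3) by auto
  obtain r where r: "walk r" "r \<noteq> []" "hd r = last ys" "last r = a" using path_ex[OF bV aV] by blast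
  define \<alpha> where "\<alpha> = ys @ tl r"
  define \<beta> where "\<beta> = zs @ tl r"
  have len: "length ys = length zs" using assms(6) by (metis length_map)
  have "\<alpha> \<noteq> \<beta>" using ne len unfolding \<alpha>_def \<beta>_def by simp
  have wa: "walk \<alpha>" unfolding \<alpha>_def using walk_join[OF assms(1) r(1) assms(3) r(2)] r(3) by simp
  have wb: "walk \<beta>" unfolding \<beta>_def using walk_join[OF assms(2) r(1) zne r(2)] r(3) assms(5) by simp
  have ha: "\<alpha> = a # tl \<alpha>" unfolding \<alpha>_def a_def using assms(3) by simp
  have hb: "\<beta> = a # tl \<beta>" unfolding \<beta>_def a_def using zne assms(4) by simp
  have lastr: "last (xs @ tl r) = a" if "xs \<noteq> []" "last xs = hd r" for xs
    using r that by (cases r) auto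
  have la: "last \<alpha> = a" unfolding \<alpha>_def using lastr assms r by simp
  have lb: "last \<beta> = a" unfolding \<beta>_def using lastr assms zne r by simp
  have cm: "map l (tl \<alpha>) = map l (tl \<beta>)" unfolding \<alpha>_def \<beta>_def using assms(6) assms(3) zne
    by (simp add: map_tl)
  have lt: "length (tl \<alpha>) = length (tl \<beta>)" using len unfolding \<alpha>_def \<beta>_def by simp
  have tne: "tl \<alpha> \<noteq> tl \<beta>" using \<open>\<alpha> \<noteq> \<beta>\<close> ha hb by auto
  define L where "L = length (tl \<alpha>)"
  have L0: "L > 0" using tne lt unfolding L_def by (metis length_0_conv neq0_conv)
  have "2 ^ k \<le> real (n_G V E l Phi (Suc (k * L)))" for k
  proof -
    have "2 ^ k \<le> card (walks_of_colors V E l (l a # concat (replicate k (map l (tl \<alpha>)))))"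
      by (rule two_loops[OF aV tne lt cm]) (simp_all only: ha[symmetric] hb[symmetric] wa wb la lb)
    also have "\<dots> \<le> n_G V E l Phi (Suc (k * L))"
    proof (rule nG_ge)
      show "length (l a # concat (replicate k (map l (tl \<alpha>)))) = Suc (k * L)"
        by (simp add: L_def length_concat sum_list_replicate)
      have "set (tl \<alpha>) \<subseteq> set \<alpha>" by (cases \<alpha>) auto
      then have "set (tl \<alpha>) \<subseteq> V" using walk_set[OF wa] by (rule order.trans)
      then show "set (l a # concat (replicate k (map l (tl \<alpha>)))) \<subseteq> Phi" using lV aV by auto
    qed
    finally show ?thesis by simp
  qed
  moreover obtain d where "(\<lambda>t. real (n_G V E l Phi t)) \<in> O(\<lambda>t. real t ^ d)"
    using tr unfolding trackable_def by blast
  ultimately show False using poly_exp_contra[OF _ L0] by blast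
qed

end



lemma finite_bound:
  fixes R :: "'a \<Rightarrow> nat \<Rightarrow> bool"
  assumes "finite Q"
  shows "\<exists>L. \<forall>q\<in>Q. (\<exists>m. R q m) \<longrightarrow> (\<exists>m\<le>L. R q m)"
  using assms
proof (induction Q rule: finite_induct)
  case empty then show ?case by simp
next
  case (insert q Q)
  then obtain L where L: "\<forall>q\<in>Q. (\<exists>m. R q m) \<longrightarrow> (\<exists>m\<le>L. R q m)" by blast
  show ?case
  proof (cases "\<exists>m. R q m")
    case True
    then obtain m where "R q m" by blast
    show ?thesis
    proof (rule exI[of _ "max L m"], intro ballI impI)
      fix q' assume "q' \<in> insert q Q" "\<exists>m. R q' m"
      then have "q' = q \<or> q' \<in> Q" by simp
      then show "\<exists>m'\<le>max L m. R q' m'"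
      proof
        assume "q' = q" then show ?thesis using \<open>R q m\<close> by (intro exI[of _ m]) auto
      next
        assume "q' \<in> Q"
        then obtain m' where "m' \<le> L" "R q' m'" using L \<open>\<exists>m. R q' m\<close> by blast
        then show ?thesis by (intro exI[of _ m']) simp
      qed
    qed
  next
    case False
    then show ?thesis using L by auto
  qed
qed

context G2
begin

definition badw :: "nat \<Rightarrow> (nat \<Rightarrow> 'v) \<Rightarrow> nat \<Rightarrow> 'v list \<Rightarrow> bool" where
  "badw s c n ys \<longleftrightarrow> is_walk V E ys \<and> length ys = Suc n \<and> ys!0 = c 0 \<and> (\<forall>i\<le>n. l (ys!i) = l (c i))
      \<and> ys ! Suc s \<noteq> c (Suc s)"

definition Dset :: "nat \<Rightarrow> (nat \<Rightarrow> 'v) \<Rightarrow> nat \<Rightarrow> 'v set" where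
  "Dset s c n = last ` {ys. badw s c n ys}"

definition killp :: "'v set \<Rightarrow> 'v \<Rightarrow> 'v list \<Rightarrow> bool" where
  "killp D x \<rho> \<longleftrightarrow> walk \<rho> \<and> \<rho> \<noteq> [] \<and> hd \<rho> = x \<and>
     \<not> (\<exists>v\<in>D. \<exists>z. walk z \<and> z \<noteq> [] \<and> hd z = v \<and> map l z = map l \<rho>)"

definition hist :: "(nat \<Rightarrow> 'v) \<Rightarrow> nat \<Rightarrow> 'v list" where
  "hist c n = map c [0..<Suc n]"

lemma hist_len: "length (hist c n) = Suc n"
  unfolding hist_def by simp

lemma hist_nth: "i \<le> n \<Longrightarrow> hist c n ! i = c i"
  unfolding hist_def by (simp del: upt_Suc)

lemma hist_ne: "hist c n \<noteq> []"
  unfolding hist_def by (simp del: upt_Suc)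

lemma hist_hd: "hd (hist c n) = c 0"
  unfolding hist_def by (simp del: upt_Suc add: upt_conv_Cons)

lemma hist_last: "last (hist c n) = c n"
  unfolding hist_def by simp

lemmas hist_simps = hist_len hist_nth hist_ne hist_hd hist_last

lemma badw_iff: "badw s c n ys \<longleftrightarrow> walk ys \<and> map l ys = map l (hist c n) \<and> hd ys = c 0 \<and> ys ! Suc s \<noteq> c (Suc s)"
proof -
  have "(map l ys = map l (hist c n)) = (length ys = Suc n \<and> (\<forall>i\<le>n. l (ys!i) = l (c i)))"
  proof
    assume m: "map l ys = map l (hist c n)"
    then have len: "length ys = Suc n" by (metis hist_len length_map)
    have "l (ys!i) = l (c i)" if "i \<le> n" for i
    proof -
      have "map l ys ! i = map l (hist c n) ! i" using m by simp
      then show ?thesis using that len by (simp add: hist_nth hist_len)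
    qed
    then show "length ys = Suc n \<and> (\<forall>i\<le>n. l (ys!i) = l (c i))" using len by blast
  next
    assume a: "length ys = Suc n \<and> (\<forall>i\<le>n. l (ys!i) = l (c i))"
    show "map l ys = map l (hist c n)"
    proof (rule nth_equalityI)
      show "length (map l ys) = length (map l (hist c n))" using a by (simp add: hist_len)
      fix i assume "i < length (map l ys)"
      then have "i \<le> n" using a by simp
      then show "map l ys ! i = map l (hist c n) ! i" using a by (simp add: hist_nth hist_len)
    qed
  qed
  moreover have "length ys = Suc n \<Longrightarrow> hd ys = ys ! 0" by (cases ys) auto
  ultimately show ?thesis unfolding badw_def is_walk_eq by (intro iffI; elim conjE; simp)
qed

lemma badw_cong: "(\<And>i. i \<le> n \<Longrightarrow> c i = c' i) \<Longrightarrow> Suc s \<le> n \<Longrightarrow> badw s c n ys = badw s c' n ys"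
  unfolding badw_def by auto

lemma W_finite: "finite {ys. walk ys \<and> P ys \<and> map l ys = \<sigma>}"
proof -
  have "{ys. walk ys \<and> P ys \<and> map l ys = \<sigma>} \<subseteq> {xs. set xs \<subseteq> V \<and> length xs = length \<sigma>}"
    using walk_set by auto
  then show ?thesis using finite_lists_length_eq[OF finV] by (rule finite_subset)
qed

lemma W_card: "card {ys. walk ys \<and> ys \<noteq> [] \<and> hd ys = a \<and> map l ys = \<sigma>} \<le> card V"
proof (rule card_inj_on_le[OF _ _ finV])
  show "inj_on last {ys. walk ys \<and> ys \<noteq> [] \<and> hd ys = a \<and> map l ys = \<sigma>}"
  proof (rule inj_onI)
    fix u u' assume "u \<in> {ys. walk ys \<and> ys \<noteq> [] \<and> hd ys = a \<and> map l ys = \<sigma>}"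
      "u' \<in> {ys. walk ys \<and> ys \<noteq> [] \<and> hd ys = a \<and> map l ys = \<sigma>}" "last u = last u'"
    then show "u = u'" using no_diamond[of u u'] by simp
  qed
  show "last ` {ys. walk ys \<and> ys \<noteq> [] \<and> hd ys = a \<and> map l ys = \<sigma>} \<subseteq> V"
    using walk_set by fastforce
qed

lemma lastr_join: "r \<noteq> [] \<Longrightarrow> xs \<noteq> [] \<Longrightarrow> last xs = hd r \<Longrightarrow> last (xs @ tl r) = last r"
  by (cases r) auto

lemma cover_impossible:
  assumes wh: "walk (hist c n)" and sn: "Suc s \<le> n"
  shows "\<exists>\<rho>. killp (Dset s c n) (c n) \<rho>"
proof (rule ccontr)
  assume nk: "\<not> (\<exists>\<rho>. killp (Dset s c n) (c n) \<rho>)"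
  have cover: "\<exists>t z. badw s c n t \<and> walk z \<and> z \<noteq> [] \<and> hd z = last t \<and> map l z = map l \<rho>"
    if "walk \<rho>" "\<rho> \<noteq> []" "hd \<rho> = c n" for \<rho>
  proof -
    have "\<not> killp (Dset s c n) (c n) \<rho>" using nk by blast
    then have "\<exists>v\<in>Dset s c n. \<exists>z. walk z \<and> z \<noteq> [] \<and> hd z = v \<and> map l z = map l \<rho>"
      using that unfolding killp_def by blast
    then obtain v z where vz: "v \<in> Dset s c n" "walk z" "z \<noteq> []" "hd z = v" "map l z = map l \<rho>"
      by blast
    then obtain t where "badw s c n t" "v = last t" unfolding Dset_def by auto
    then show ?thesis using vz by blast
  qed
  define \<pi> where "\<pi> = hist c n"
  define a where "a = c 0"
  have piV: "set \<pi> \<subseteq> V" using walk_set wh \<pi>_def by auto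
  have "a \<in> set \<pi>" unfolding a_def \<pi>_def using hd_in_set[OF hist_ne[of c n]] by (simp add: hist_hd)
  then have aV: "a \<in> V" using piV by blast
  have "c n \<in> set \<pi>" unfolding \<pi>_def using last_in_set[OF hist_ne[of c n]] by (simp add: hist_last)
  then have xV: "c n \<in> V" using piV by blast
  obtain r where r: "walk r" "r \<noteq> []" "hd r = c n" "last r = a" using path_ex[OF xV aV] by blast
  define \<Lambda> where "\<Lambda> = \<pi> @ tl r"
  have wL: "walk \<Lambda>" unfolding \<Lambda>_def \<pi>_def using walk_join[OF wh r(1) hist_simps(3) r(2)] r(3) hist_simps by simp
  have lL: "last \<Lambda> = a" unfolding \<Lambda>_def \<pi>_def using lastr_join[OF r(2) hist_simps(3)] r hist_simps by simp
  have nL: "\<Lambda> \<noteq> []" and hL: "hd \<Lambda> = a" unfolding \<Lambda>_def \<pi>_def a_def using hist_simps by auto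
  define W where "W \<sigma> = {ys. walk ys \<and> ys \<noteq> [] \<and> hd ys = a \<and> map l ys = \<sigma>}" for \<sigma>
  have Wfin: "finite (W \<sigma>)" for \<sigma> unfolding W_def using W_finite[of "\<lambda>ys. ys \<noteq> [] \<and> hd ys = a"]
    by (simp add: conj_assoc)
  have step: "Suc (card (W (map l w))) \<le> card (W (map l (\<Lambda> @ tl w)))"
    if w: "walk w" "w \<noteq> []" "hd w = a" for w
  proof -
    define f where "f u = \<Lambda> @ tl u" for u
    have img: "f ` W (map l w) \<subseteq> W (map l (\<Lambda> @ tl w))"
    proof
      fix y assume "y \<in> f ` W (map l w)"
      then obtain u where u: "walk u" "u \<noteq> []" "hd u = a" "map l u = map l w" and y: "y = f u"
        unfolding W_def by auto
      have "walk y" unfolding y f_def using walk_join[OF wL u(1) nL u(2)] lL u(3) by simp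
      moreover have "map l y = map l (\<Lambda> @ tl w)" unfolding y f_def using u(4) by (simp add: map_tl)
      ultimately show "y \<in> W (map l (\<Lambda> @ tl w))" unfolding W_def using nL hL y f_def by auto
    qed
    have inj: "inj_on f (W (map l w))"
    proof (rule inj_onI)
      fix u u' assume "u \<in> W (map l w)" "u' \<in> W (map l w)" "f u = f u'"
      then have "tl u = tl u'" "u \<noteq> []" "u' \<noteq> []" "hd u = hd u'" unfolding W_def f_def by auto
      then show "u = u'" by (metis list.collapse)
    qed
    define \<rho> where "\<rho> = r @ tl w"
    have wr: "walk \<rho>" unfolding \<rho>_def using walk_join[OF r(1) w(1) r(2) w(2)] r(4) w(3) by simp
    have "\<rho> \<noteq> []" "hd \<rho> = c n" unfolding \<rho>_def using r by auto
    from cover[OF wr this] obtain t z where t: "badw s c n t" and z: "walk z" "z \<noteq> []" "hd z = last t"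
      "map l z = map l \<rho>" by blast
    from t have t': "walk t" "map l t = map l \<pi>" "hd t = a" "t ! Suc s \<noteq> c (Suc s)"
      unfolding badw_iff \<pi>_def a_def by auto
    have tne: "t \<noteq> []" using t' hist_simps(3)[where c=c and n=n] unfolding \<pi>_def by auto
    define e where "e = t @ tl z"
    have "walk e" unfolding e_def using walk_join[OF t'(1) z(1) tne z(2)] z(3) by simp
    moreover have "e \<noteq> []" "hd e = a" unfolding e_def using tne t' by auto
    moreover have "map l e = map l (\<Lambda> @ tl w)"
      unfolding e_def \<Lambda>_def using z(4) t'(2) r(2) by (simp add: \<rho>_def map_tl)
    ultimately have eW: "e \<in> W (map l (\<Lambda> @ tl w))" unfolding W_def by auto
    have "e \<notin> f ` W (map l w)"
    proof
      assume "e \<in> f ` W (map l w)"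
      then obtain u where "t @ tl z = \<pi> @ (tl r @ tl u)" unfolding e_def f_def \<Lambda>_def by auto
      moreover have "length t = length \<pi>" using t'(2) by (metis length_map)
      ultimately have "t = \<pi>" by (simp add: append_eq_append_conv)
      then show False using t'(4) sn hist_simps(2)[where i="Suc s" and n=n and c=c] unfolding \<pi>_def by simp
    qed
    then have "card (insert e (f ` W (map l w))) = Suc (card (W (map l w)))"
      using card_image[OF inj] Wfin by (simp add: card_insert_if)
    moreover have "insert e (f ` W (map l w)) \<subseteq> W (map l (\<Lambda> @ tl w))" using eW img by auto
    ultimately show ?thesis using card_mono[OF Wfin[of "map l (\<Lambda> @ tl w)"], of "insert e (f ` W (map l w))"] by linarith
  qed
  have grow: "\<exists>w. walk w \<and> w \<noteq> [] \<and> hd w = a \<and> k \<le> card (W (map l w))" for k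
  proof (induction k)
    case 0 then show ?case using aV by (intro exI[of _ "[a]"]) auto
  next
    case (Suc k)
    then obtain w where w: "walk w" "w \<noteq> []" "hd w = a" "k \<le> card (W (map l w))" by blast
    have "walk (\<Lambda> @ tl w)" using walk_join[OF wL w(1) nL w(2)] lL w(3) by simp
    moreover have "\<Lambda> @ tl w \<noteq> []" "hd (\<Lambda> @ tl w) = a" using nL hL by auto
    ultimately show ?case using step[OF w(1-3)] w(4) by (intro exI[of _ "\<Lambda> @ tl w"]) auto
  qed
  obtain w where "Suc (card V) \<le> card (W (map l w))" using grow by blast
  moreover have "card (W (map l w)) \<le> card V" unfolding W_def by (rule W_card)
  ultimately show False by simp
qed

lemma kill_not_bad:
  assumes k: "killp (Dset s c n) (c n) \<rho>" and len: "length \<rho> = Suc m"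
    and agree: "\<And>i. i \<le> m \<Longrightarrow> c (n+i) = \<rho> ! i" and sn: "Suc s \<le> n"
  shows "\<not> badw s c (n+m) ys"
proof
  assume b: "badw s c (n+m) ys"
  define t where "t = take (Suc n) ys"
  define z where "z = drop n ys"
  from b have ys: "is_walk V E ys" "length ys = Suc (n+m)" "ys!0 = c 0"
    "\<forall>i\<le>n+m. l (ys!i) = l (c i)" "ys ! Suc s \<noteq> c (Suc s)" unfolding badw_def by auto
  have "badw s c n t" unfolding badw_def t_def using ys sn
    by (auto simp: is_walk_eq walk_take)
  then have "last t \<in> Dset s c n" unfolding Dset_def by auto
  moreover have "walk z" unfolding z_def using ys(1) by (simp add: is_walk_eq walk_drop)
  moreover have "z \<noteq> []" unfolding z_def using ys(2) by simp
  moreover have "hd z = last t"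
  proof -
    have "take (Suc n) ys = take n ys @ [ys!n]" using ys(2) by (simp add: take_Suc_conv_app_nth)
    then show ?thesis unfolding z_def t_def using ys(2) by (simp add: hd_drop_conv_nth)
  qed
  moreover have "map l z = map l \<rho>"
  proof (rule nth_equalityI)
    show "length (map l z) = length (map l \<rho>)" unfolding z_def using ys(2) len by simp
    fix i assume "i < length (map l z)"
    then have i: "i \<le> m" unfolding z_def using ys(2) by simp
    then show "map l z ! i = map l \<rho> ! i" unfolding z_def using ys(2,4) len agree[OF i]
      by auto
  qed
  ultimately show False using k unfolding killp_def by blast
qed

lemma walk_extend:
  assumes succ: "\<And>v. v \<in> V \<Longrightarrow> \<exists>w. (v,w) \<in> E" and v: "v \<in> V"
  shows "\<exists>w. walk w \<and> w \<noteq> [] \<and> hd w = v \<and> length w = Suc m"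
proof (induction m)
  case 0 then show ?case using v by (intro exI[of _ "[v]"]) auto
next
  case (Suc m)
  then obtain w where w: "walk w" "w \<noteq> []" "hd w = v" "length w = Suc m" by blast
  have "last w \<in> V" using walk_set[OF w(1)] w(2) by auto
  then obtain y where y: "(last w, y) \<in> E" using succ by blast
  then have "y \<in> V" using EV by auto
  then have "walk (w @ [y])" using w y by (simp add: walk_append)
  then show ?case using w by (intro exI[of _ "w @ [y]"]) auto
qed

lemma kill_pad:
  assumes succ: "\<And>v. v \<in> V \<Longrightarrow> \<exists>w. (v,w) \<in> E"
    and k: "killp D x \<rho>" and len: "length \<rho> \<le> Suc L"
  shows "\<exists>\<rho>'. killp D x \<rho>' \<and> length \<rho>' = Suc L"
proof -
  from k have r: "walk \<rho>" "\<rho> \<noteq> []" "hd \<rho> = x" unfolding killp_def by auto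
  have "last \<rho> \<in> V" using walk_set[OF r(1)] r(2) by auto
  from walk_extend[OF succ this, of "Suc L - length \<rho>"] obtain w where
    w: "walk w" "w \<noteq> []" "hd w = last \<rho>" "length w = Suc (Suc L - length \<rho>)" by blast
  define \<rho>' where "\<rho>' = \<rho> @ tl w"
  have "walk \<rho>'" unfolding \<rho>'_def using walk_join[OF r(1) w(1) r(2) w(2)] w(3) by simp
  moreover have "length \<rho>' = Suc L" unfolding \<rho>'_def using w(4) len r(2) by auto
  moreover have "\<rho>' \<noteq> []" "hd \<rho>' = x" unfolding \<rho>'_def using r by auto
  moreover have "\<not> (\<exists>v\<in>D. \<exists>z. walk z \<and> z \<noteq> [] \<and> hd z = v \<and> map l z = map l \<rho>')"
  proof
    assume "\<exists>v\<in>D. \<exists>z. walk z \<and> z \<noteq> [] \<and> hd z = v \<and> map l z = map l \<rho>'"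
    then obtain v z where z: "v \<in> D" "walk z" "z \<noteq> []" "hd z = v" "map l z = map l \<rho>'" by blast
    define z' where "z' = take (length \<rho>) z"
    have "walk z'" unfolding z'_def using z(2) by (rule walk_take)
    moreover have "z' \<noteq> []" "hd z' = v" unfolding z'_def using z r(2) by auto
    moreover have "map l z' = map l \<rho>" unfolding z'_def \<rho>'_def using z(5)
      by (metis \<rho>'_def append_eq_conv_conj length_map take_map)
    ultimately show False using k z(1) unfolding killp_def by blast
  qed
  ultimately show ?thesis unfolding killp_def by blast
qed

lemma uniform_kill:
  assumes succ: "\<And>v. v \<in> V \<Longrightarrow> \<exists>w. (v,w) \<in> E"
  shows "\<exists>L. \<forall>x\<in>V. \<forall>D. D \<subseteq> V \<longrightarrow> (\<exists>\<rho>. killp D x \<rho>) \<longrightarrow> (\<exists>\<rho>. killp D x \<rho> \<and> length \<rho> = Suc L)"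
proof -
  have "finite (V \<times> Pow V)" using finV by simp
  from finite_bound[OF this, of "\<lambda>(x,D) m. \<exists>\<rho>. killp D x \<rho> \<and> length \<rho> = m"]
  obtain L where L: "\<forall>q\<in>V \<times> Pow V. (\<exists>m. (\<lambda>(x,D) m. \<exists>\<rho>. killp D x \<rho> \<and> length \<rho> = m) q m)
     \<longrightarrow> (\<exists>m\<le>L. (\<lambda>(x,D) m. \<exists>\<rho>. killp D x \<rho> \<and> length \<rho> = m) q m)" by blast
  show ?thesis
  proof (intro exI[of _ L] ballI allI impI)
    fix x D assume "x \<in> V" "D \<subseteq> V" "\<exists>\<rho>. killp D x \<rho>"
    then have "(x,D) \<in> V \<times> Pow V" "\<exists>m. \<exists>\<rho>. killp D x \<rho> \<and> length \<rho> = m" by auto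
    with L have "\<exists>m\<le>L. \<exists>\<rho>. killp D x \<rho> \<and> length \<rho> = m" by auto
    then obtain \<rho> where "killp D x \<rho>" "length \<rho> \<le> L" by blast
    then show "\<exists>\<rho>. killp D x \<rho> \<and> length \<rho> = Suc L" using kill_pad[OF succ] by simp
  qed
qed

lemma Dset_sub: "Dset s c n \<subseteq> V"
proof
  fix v assume "v \<in> Dset s c n"
  then obtain ys where "badw s c n ys" "v = last ys" unfolding Dset_def by auto
  then show "v \<in> V" unfolding badw_def is_walk_eq using walk_set
    by (metis Zero_not_Suc last_in_set list.size(3) subsetD)
qed

end



locale MC = G2 V E l Phi for V :: "'v set" and E l Phi +
  fixes M :: "'w measure" and P :: "'v \<Rightarrow> 'v \<Rightarrow> real" and X :: "nat \<Rightarrow> 'w \<Rightarrow> 'v"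
  assumes mc: "markov_chain M V P X" and pos: "\<forall>i\<in>V. \<forall>j\<in>V. P i j > 0 \<longleftrightarrow> (i,j) \<in> E"
begin

lemma ps: "prob_space M" and Xmeas: "X t \<in> measurable M (count_space UNIV)"
  and XV: "\<omega> \<in> space M \<Longrightarrow> X t \<omega> \<in> V" and Pnn: "i \<in> V \<Longrightarrow> j \<in> V \<Longrightarrow> P i j \<ge> 0"
  and Psum: "i \<in> V \<Longrightarrow> (\<Sum>j\<in>V. P i j) = 1"
  and markov: "measure M {\<omega> \<in> space M. \<forall>i \<le> Suc t. X i \<omega> = xs i}
          = measure M {\<omega> \<in> space M. \<forall>i \<le> t. X i \<omega> = xs i} * P (xs t) (xs (Suc t))"
  using mc unfolding markov_chain_def by auto

interpretation prob_space M by (rule ps)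

lemma succ: "v \<in> V \<Longrightarrow> \<exists>w. (v,w) \<in> E"
proof (rule ccontr)
  assume v: "v \<in> V" and "\<not> (\<exists>w. (v,w) \<in> E)"
  then have "\<forall>j\<in>V. P v j = 0" using pos Pnn[OF v] v by force
  then have "(\<Sum>j\<in>V. P v j) = 0" by simp
  then show False using Psum[OF v] by simp
qed

lemma P_le1: "i \<in> V \<Longrightarrow> j \<in> V \<Longrightarrow> P i j \<le> 1"
  using member_le_sum[of j V "P i"] Pnn Psum finV by auto

definition cyl :: "nat \<Rightarrow> (nat \<Rightarrow> 'v) \<Rightarrow> 'w set" where
  "cyl n c = {\<omega> \<in> space M. \<forall>i\<le>n. X i \<omega> = c i}"

lemma cyl_sets: "cyl n c \<in> sets M"
proof -
  have "cyl n c = (\<Inter>i\<in>{..n}. X i -` {c i} \<inter> space M)" unfolding cyl_def by auto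
  also have "\<dots> \<in> sets M"
    by (rule sets.finite_INT) (auto intro: measurable_sets[OF Xmeas])
  finally show ?thesis .
qed

lemma cyl_prod: "measure M (cyl (n+m) c) = measure M (cyl n c) * (\<Prod>j<m. P (c (n+j)) (c (Suc (n+j))))"
proof (induction m)
  case 0 then show ?case by simp
next
  case (Suc m)
  have "measure M (cyl (n + Suc m) c) = measure M (cyl (n+m) c) * P (c (n+m)) (c (Suc (n+m)))"
    unfolding cyl_def using markov[of "n+m" c] by simp
  then show ?case using Suc by (simp add: mult.assoc)
qed

lemma cyl_walk: "measure M (cyl n c) > 0 \<Longrightarrow> walk (hist c n)"
proof (induction n)
  case 0
  then obtain \<omega> where "\<omega> \<in> cyl 0 c" by fastforce
  then have "c 0 \<in> V" unfolding cyl_def using XV by (metis (mono_tags, lifting) le_refl mem_Collect_eq)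
  then show ?case by (simp add: hist_def)
next
  case (Suc n)
  have eq: "measure M (cyl (Suc n) c) = measure M (cyl n c) * P (c n) (c (Suc n))"
    unfolding cyl_def using markov[of n c] by simp
  from Suc.prems obtain \<omega> where "\<omega> \<in> cyl (Suc n) c" by fastforce
  then have V: "c n \<in> V" "c (Suc n) \<in> V" unfolding cyl_def using XV by (metis (mono_tags, lifting) le_SucI mem_Collect_eq order_refl)+
  have m: "measure M (cyl n c) > 0" using Suc.prems eq
    by (metis less_eq_real_def measure_nonneg mult_eq_0_iff)
  have "P (c n) (c (Suc n)) > 0" using Suc.prems eq m by (simp add: zero_less_mult_iff)
  then have E: "(c n, c (Suc n)) \<in> E" using pos V by auto
  have "hist c (Suc n) = hist c n @ [c (Suc n)]" unfolding hist_def by simp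
  moreover have "walk (hist c n)" using Suc.IH m by simp
  ultimately show ?case using E V by (simp add: walk_append hist_ne hist_last)
qed

end



context MC
begin

interpretation prob_space M by (rule ps)

definition badset :: "nat \<Rightarrow> nat \<Rightarrow> 'w set" where
  "badset s n = {\<omega> \<in> space M. \<exists>ys. badw s (\<lambda>i. X i \<omega>) n ys}"

definition H :: "nat \<Rightarrow> 'v list set" where
  "H n = {h. set h \<subseteq> V \<and> length h = Suc n}"

lemma H_finite: "finite (H n)"
  unfolding H_def using finite_lists_length_eq[OF finV] by simp

lemma hist_H: "\<omega> \<in> space M \<Longrightarrow> hist (\<lambda>i. X i \<omega>) n \<in> H n"
  unfolding H_def hist_def using XV by auto

lemma hist_cyl: "\<omega> \<in> space M \<Longrightarrow> \<omega> \<in> cyl n (nth (hist (\<lambda>i. X i \<omega>) n))"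
  unfolding cyl_def by (simp add: hist_nth)

lemma cyl_hist: "h \<in> H n \<Longrightarrow> \<omega> \<in> cyl n (nth h) \<Longrightarrow> hist (\<lambda>i. X i \<omega>) n = h"
  unfolding cyl_def H_def
  by (intro nth_equalityI) (auto simp: hist_len hist_nth less_Suc_eq_le)

lemma cyl_disj: "disjoint_family_on (\<lambda>h. cyl n (nth h) \<inter> B) (H n)"
  unfolding disjoint_family_on_def
proof (intro ballI impI)
  fix h h' assume "h \<in> H n" "h' \<in> H n" "h \<noteq> h'"
  show "cyl n (nth h) \<inter> B \<inter> (cyl n (nth h') \<inter> B) = {}"
  proof (rule ccontr)
    assume "cyl n (nth h) \<inter> B \<inter> (cyl n (nth h') \<inter> B) \<noteq> {}"
    then obtain \<omega> where "\<omega> \<in> cyl n (nth h)" "\<omega> \<in> cyl n (nth h')" by blast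
    then have "h = h'" using cyl_hist[OF \<open>h \<in> H n\<close>] cyl_hist[OF \<open>h' \<in> H n\<close>] by metis
    then show False using \<open>h \<noteq> h'\<close> by simp
  qed
qed

lemma decomp:
  assumes "B \<in> sets M"
  shows "measure M B = (\<Sum>h\<in>H n. measure M (cyl n (nth h) \<inter> B))"
proof -
  have B: "B \<subseteq> space M" using assms sets.sets_into_space by auto
  have "B = (\<Union>h\<in>H n. cyl n (nth h) \<inter> B)"
  proof
    show "B \<subseteq> (\<Union>h\<in>H n. cyl n (nth h) \<inter> B)"
    proof
      fix \<omega> assume "\<omega> \<in> B"
      then have "\<omega> \<in> space M" using B by blast
      then have "hist (\<lambda>i. X i \<omega>) n \<in> H n" "\<omega> \<in> cyl n (nth (hist (\<lambda>i. X i \<omega>) n))"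
        by (rule hist_H, rule hist_cyl)
      then show "\<omega> \<in> (\<Union>h\<in>H n. cyl n (nth h) \<inter> B)" using \<open>\<omega> \<in> B\<close> by blast
    qed
  qed auto
  then have "measure M B = measure M (\<Union>h\<in>H n. cyl n (nth h) \<inter> B)" by simp
  also have "\<dots> = (\<Sum>h\<in>H n. measure M (cyl n (nth h) \<inter> B))"
    by (rule finite_measure_finite_Union[OF H_finite _ cyl_disj]) (use cyl_sets assms in auto)
  finally show ?thesis .
qed

lemma badw_take: "badw s c (n+m) ys \<Longrightarrow> Suc s \<le> n \<Longrightarrow> badw s c n (take (Suc n) ys)"
  unfolding badw_def by (auto simp: is_walk_eq walk_take)

lemma badset_mono: "Suc s \<le> n \<Longrightarrow> badset s (n+m) \<subseteq> badset s n"
  unfolding badset_def using badw_take by blast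

lemma badset_eq: "Suc s \<le> n \<Longrightarrow> badset s n = (\<Union>h\<in>{h\<in>H n. \<exists>ys. badw s (nth h) n ys}. cyl n (nth h))"
proof -
  assume sn: "Suc s \<le> n"
  have cong: "badw s (\<lambda>i. X i \<omega>) n ys = badw s (nth h) n ys" if "h \<in> H n" "\<omega> \<in> cyl n (nth h)" for \<omega> h ys
    using that(2) sn unfolding cyl_def by (intro badw_cong) auto
  show ?thesis
  proof
    show "badset s n \<subseteq> (\<Union>h\<in>{h\<in>H n. \<exists>ys. badw s (nth h) n ys}. cyl n (nth h))"
    proof
      fix \<omega> assume w: "\<omega> \<in> badset s n"
      then have "\<omega> \<in> space M" unfolding badset_def by auto
      then have hH: "hist (\<lambda>i. X i \<omega>) n \<in> H n" and hc: "\<omega> \<in> cyl n (nth (hist (\<lambda>i. X i \<omega>) n))"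
        by (rule hist_H, rule hist_cyl)
      from w obtain ys where "badw s (\<lambda>i. X i \<omega>) n ys" unfolding badset_def by blast
      then have "badw s (nth (hist (\<lambda>i. X i \<omega>) n)) n ys" using cong[OF hH hc] by simp
      then show "\<omega> \<in> (\<Union>h\<in>{h\<in>H n. \<exists>ys. badw s (nth h) n ys}. cyl n (nth h))"
        using hH hc by blast
    qed
    show "(\<Union>h\<in>{h\<in>H n. \<exists>ys. badw s (nth h) n ys}. cyl n (nth h)) \<subseteq> badset s n"
    proof
      fix \<omega> assume "\<omega> \<in> (\<Union>h\<in>{h\<in>H n. \<exists>ys. badw s (nth h) n ys}. cyl n (nth h))"
      then obtain h ys where h: "h \<in> H n" "badw s (nth h) n ys" "\<omega> \<in> cyl n (nth h)" by blast
      then have "badw s (\<lambda>i. X i \<omega>) n ys" using cong[OF h(1) h(3)] by simp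
      moreover have "\<omega> \<in> space M" using h(3) unfolding cyl_def by simp
      ultimately show "\<omega> \<in> badset s n" unfolding badset_def by blast
    qed
  qed
qed

lemma badset_sets: "Suc s \<le> n \<Longrightarrow> badset s n \<in> sets M"
  by (subst badset_eq) (auto intro!: sets.finite_UN cyl_sets simp: H_finite)

lemma walk_nth: "walk xs \<Longrightarrow> Suc j < length xs \<Longrightarrow> (xs!j, xs!Suc j) \<in> E"
  unfolding is_walk_eq[symmetric] is_walk_def by auto

definition pmin :: real where "pmin = Min ((\<lambda>(i,j). P i j) ` E)"

lemma E_finite: "finite E" using finite_subset[OF EV] finV by simp

lemma E_ne: "E \<noteq> {}"
proof -
  obtain \<omega> where "\<omega> \<in> space M" using not_empty by blast
  then have "X 0 \<omega> \<in> V" by (rule XV)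
  then show ?thesis using succ by blast
qed

lemma pmin_le: "(i,j) \<in> E \<Longrightarrow> pmin \<le> P i j"
  unfolding pmin_def using E_finite by (auto intro: Min_le)

lemma pmin_pos: "pmin > 0"
proof -
  have "pmin \<in> (\<lambda>(i,j). P i j) ` E" unfolding pmin_def using E_finite E_ne by (intro Min_in) auto
  then obtain i j where "(i,j) \<in> E" "pmin = P i j" by auto
  then show ?thesis using pos EV by auto
qed

lemma pmin_le1: "pmin \<le> 1"
proof -
  obtain i j where "(i,j) \<in> E" using E_ne by auto
  then show ?thesis using pmin_le[of i j] P_le1[of i j] EV by auto
qed

definition Lk :: nat where
  "Lk = (SOME L. \<forall>x\<in>V. \<forall>D. D \<subseteq> V \<longrightarrow> (\<exists>\<rho>. killp D x \<rho>) \<longrightarrow> (\<exists>\<rho>. killp D x \<rho> \<and> length \<rho> = Suc L))"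

lemma Lk: "x \<in> V \<Longrightarrow> D \<subseteq> V \<Longrightarrow> \<exists>\<rho>. killp D x \<rho> \<Longrightarrow> \<exists>\<rho>. killp D x \<rho> \<and> length \<rho> = Suc Lk"
proof -
  assume a: "x \<in> V" "D \<subseteq> V" "\<exists>\<rho>. killp D x \<rho>"
  have "\<forall>x\<in>V. \<forall>D. D \<subseteq> V \<longrightarrow> (\<exists>\<rho>. killp D x \<rho>) \<longrightarrow> (\<exists>\<rho>. killp D x \<rho> \<and> length \<rho> = Suc Lk)"
    unfolding Lk_def by (rule someI_ex[OF uniform_kill[OF succ]])
  from this[rule_format, OF a] show ?thesis .
qed

end



context MC
begin

interpretation prob_space M by (rule ps)

lemma cyl_badw: "\<omega> \<in> cyl n c \<Longrightarrow> Suc s \<le> n \<Longrightarrow> badw s (\<lambda>i. X i \<omega>) n ys = badw s c n ys"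
  unfolding cyl_def by (intro badw_cong) auto

lemma step_ineq:
  assumes sn: "Suc s \<le> n"
  shows "measure M (badset s (n+Lk)) \<le> (1 - pmin^Lk) * measure M (badset s n)"
proof -
  define \<delta> where "\<delta> = pmin ^ Lk"
  have d0: "0 \<le> \<delta>" and d1: "\<delta> \<le> 1" unfolding \<delta>_def using pmin_pos pmin_le1
    by (auto intro: power_le_one)
  have mono: "badset s (n+Lk) \<subseteq> badset s n" by (rule badset_mono[OF sn])
  have per: "measure M (cyl n (nth h) \<inter> badset s (n+Lk)) \<le> (1-\<delta>) * measure M (cyl n (nth h) \<inter> badset s n)"
    if hH: "h \<in> H n" for h
  proof (cases "\<exists>ys. badw s (nth h) n ys")
    case False
    have "cyl n (nth h) \<inter> badset s n = {}"
      using False cyl_badw[OF _ sn] unfolding badset_def by blast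
    then have "cyl n (nth h) \<inter> badset s (n+Lk) = {}" using mono by blast
    then show ?thesis using \<open>cyl n (nth h) \<inter> badset s n = {}\<close> by simp
  next
    case True
    then obtain ys0 where ys0: "badw s (nth h) n ys0" by blast
    have CB: "cyl n (nth h) \<inter> badset s n = cyl n (nth h)"
    proof -
      have "cyl n (nth h) \<subseteq> badset s n"
      proof
        fix \<omega> assume w: "\<omega> \<in> cyl n (nth h)"
        then have "badw s (\<lambda>i. X i \<omega>) n ys0" using cyl_badw[OF w sn] ys0 by simp
        moreover have "\<omega> \<in> space M" using w unfolding cyl_def by simp
        ultimately show "\<omega> \<in> badset s n" unfolding badset_def by blast
      qed
      then show ?thesis by blast
    qed
    have le1: "measure M (cyl n (nth h) \<inter> badset s (n+Lk)) \<le> measure M (cyl n (nth h))"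
      by (rule finite_measure_mono) (auto simp: cyl_sets)
    show ?thesis
    proof (cases "measure M (cyl n (nth h)) = 0")
      case True
      then show ?thesis using le1 CB by simp
    next
      case False
      then have mpos: "measure M (cyl n (nth h)) > 0" by (simp add: less_le)
      have hV: "set h \<subseteq> V" "length h = Suc n" using hH unfolding H_def by auto
      have hn: "h ! n \<in> V" using hV by (simp add: subsetD)
      from cover_impossible[OF cyl_walk[OF mpos] sn]
      have "\<exists>\<rho>. killp (Dset s (nth h) n) (h ! n) \<rho>" by simp
      from Lk[OF hn Dset_sub this] obtain \<rho> where
        k: "killp (Dset s (nth h) n) (h ! n) \<rho>" and lr: "length \<rho> = Suc Lk" by blast
      from k have wr: "walk \<rho>" "\<rho> \<noteq> []" "hd \<rho> = h ! n" unfolding killp_def by auto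
      define c' where "c' i = (if i \<le> n then h ! i else \<rho> ! (i - n))" for i
      have agree: "c' (n+i) = \<rho> ! i" if "i \<le> Lk" for i
      proof (cases "i = 0")
        case True then show ?thesis using wr unfolding c'_def by (simp add: hd_conv_nth)
      next
        case False then show ?thesis unfolding c'_def by simp
      qed
      have c'n: "\<And>i. i \<le> n \<Longrightarrow> c' i = h ! i" unfolding c'_def by simp
      define C' where "C' = cyl (n+Lk) c'"
      have cyl_eq: "cyl n c' = cyl n (nth h)" unfolding cyl_def using c'n by auto
      have C'sub: "C' \<subseteq> cyl n (nth h)" unfolding C'_def cyl_def using c'n by auto
      have Dset_eq: "Dset s c' n = Dset s (nth h) n"
      proof -
        have "badw s c' n = badw s (nth h) n" using badw_cong[OF _ sn, of c' "nth h"] c'n by (intro ext) simp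
        then show ?thesis unfolding Dset_def by simp
      qed
      have kc: "killp (Dset s c' n) (c' n) \<rho>" using k Dset_eq c'n[of n] by simp
      have C'bad: "C' \<inter> badset s (n+Lk) = {}"
      proof -
        { fix \<omega> ys assume w: "\<omega> \<in> C'" and b: "badw s (\<lambda>i. X i \<omega>) (n+Lk) ys"
          have "badw s c' (n+Lk) ys" using cyl_badw[of \<omega> "n+Lk" c' s ys] w b sn unfolding C'_def by simp
          moreover have "\<not> badw s c' (n+Lk) ys" by (rule kill_not_bad[OF kc lr agree sn])
          ultimately have False by simp }
        then show ?thesis unfolding badset_def by blast
      qed
      have prod: "\<delta> \<le> (\<Prod>j<Lk. P (c' (n+j)) (c' (Suc (n+j))))"
      proof -
        have "(\<Prod>j<Lk. pmin) \<le> (\<Prod>j<Lk. P (c' (n+j)) (c' (Suc (n+j))))"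
        proof (rule prod_mono)
          fix j assume "j \<in> {..<Lk}"
          then have j: "j < Lk" by simp
          have "c' (n+j) = \<rho> ! j" using agree j by simp
          moreover have "c' (Suc (n+j)) = \<rho> ! Suc j" using agree[of "Suc j"] j by simp
          moreover have "(\<rho> ! j, \<rho> ! Suc j) \<in> E" using walk_nth[OF wr(1)] lr j by simp
          ultimately show "0 \<le> pmin \<and> pmin \<le> P (c' (n+j)) (c' (Suc (n+j)))"
            using pmin_le pmin_pos by auto
        qed
        then show ?thesis unfolding \<delta>_def by simp
      qed
      have mC': "\<delta> * measure M (cyl n (nth h)) \<le> measure M C'"
      proof -
        have "measure M C' = measure M (cyl n (nth h)) * (\<Prod>j<Lk. P (c' (n+j)) (c' (Suc (n+j))))"
          unfolding C'_def using cyl_prod[of n Lk c'] cyl_eq by simp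
        then show ?thesis using prod mpos by (simp add: mult.commute mult_left_mono)
      qed
      have "cyl n (nth h) \<inter> badset s (n+Lk) \<subseteq> cyl n (nth h) - C'" using C'bad by blast
      then have "measure M (cyl n (nth h) \<inter> badset s (n+Lk)) \<le> measure M (cyl n (nth h) - C')"
        by (intro finite_measure_mono) (auto simp: cyl_sets C'_def)
      also have "\<dots> = measure M (cyl n (nth h)) - measure M C'"
        by (rule finite_measure_Diff) (auto simp: cyl_sets C'_def C'sub[unfolded C'_def])
      also have "\<dots> \<le> (1-\<delta>) * measure M (cyl n (nth h))" using mC' by (simp add: algebra_simps)
      finally show ?thesis using CB by simp
    qed
  qed
  have "measure M (badset s (n+Lk)) = (\<Sum>h\<in>H n. measure M (cyl n (nth h) \<inter> badset s (n+Lk)))"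
    by (rule decomp) (rule badset_sets, use sn in simp)
  also have "\<dots> \<le> (\<Sum>h\<in>H n. (1-\<delta>) * measure M (cyl n (nth h) \<inter> badset s n))"
    by (rule sum_mono) (rule per)
  also have "\<dots> = (1-\<delta>) * (\<Sum>h\<in>H n. measure M (cyl n (nth h) \<inter> badset s n))"
    by (simp add: sum_distrib_left)
  also have "\<dots> = (1-\<delta>) * measure M (badset s n)"
    using decomp[OF badset_sets[OF sn]] by simp
  finally show ?thesis unfolding \<delta>_def .
qed

lemma iter: "measure M (badset s (Suc s + k*Lk)) \<le> (1 - pmin^Lk) ^ k"
proof (induction k)
  case 0 then show ?case by simp
next
  case (Suc k)
  have d: "0 \<le> 1 - pmin^Lk" using pmin_pos pmin_le1 by (simp add: power_le_one)
  have "measure M (badset s (Suc s + Suc k * Lk)) = measure M (badset s ((Suc s + k*Lk) + Lk))"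
    by (simp add: algebra_simps)
  also have "\<dots> \<le> (1 - pmin^Lk) * measure M (badset s (Suc s + k*Lk))"
    by (rule step_ineq) simp
  also have "\<dots> \<le> (1 - pmin^Lk) * (1 - pmin^Lk) ^ k"
    by (rule mult_left_mono[OF Suc d])
  finally show ?case by simp
qed

lemma AE_s: "AE \<omega> in M. \<exists>N > s. \<forall>ys.
           is_walk V E ys \<and> length ys = Suc N \<and> ys ! 0 = X 0 \<omega> \<and>
           (\<forall>i \<le> N. l (ys ! i) = l (X i \<omega>))
           \<longrightarrow> ys ! Suc s = X (Suc s) \<omega>"
proof -
  define q where "q = 1 - pmin^Lk"
  have q0: "0 \<le> q" and q1: "q < 1" unfolding q_def using pmin_pos pmin_le1
    by (auto simp: power_le_one)
  define Z where "Z = (\<Inter>k. badset s (Suc s + k*Lk))"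
  have Zs: "Z \<in> sets M" unfolding Z_def by (intro sets.countable_INT) (auto intro: badset_sets)
  have Zle: "measure M Z \<le> q ^ k" for k
  proof -
    have "measure M Z \<le> measure M (badset s (Suc s + k*Lk))"
      by (rule finite_measure_mono) (auto simp: Z_def intro: badset_sets)
    then show ?thesis using iter[of s k] unfolding q_def by linarith
  qed
  have Z0: "measure M Z = 0"
  proof (rule ccontr)
    assume "measure M Z \<noteq> 0"
    then have mz: "measure M Z > 0" by (simp add: less_le)
    have "(\<lambda>k. q ^ k) \<longlonglongrightarrow> 0" using q0 q1 by (intro LIMSEQ_power_zero) simp
    then have "eventually (\<lambda>k. q ^ k < measure M Z) sequentially" using mz by (rule order_tendstoD(2))
    then obtain k where "q ^ k < measure M Z" by (auto simp: eventually_sequentially)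
    then show False using Zle[of k] by simp
  qed
  have null: "Z \<in> null_sets M" using Zs Z0 by (auto simp: emeasure_eq_measure)
  show ?thesis
  proof (rule AE_I'[OF null])
    show "{\<omega> \<in> space M. \<not> (\<exists>N > s. \<forall>ys.
           is_walk V E ys \<and> length ys = Suc N \<and> ys ! 0 = X 0 \<omega> \<and>
           (\<forall>i \<le> N. l (ys ! i) = l (X i \<omega>))
           \<longrightarrow> ys ! Suc s = X (Suc s) \<omega>)} \<subseteq> Z"
    proof
      fix \<omega> assume "\<omega> \<in> {\<omega> \<in> space M. \<not> (\<exists>N > s. \<forall>ys.
           is_walk V E ys \<and> length ys = Suc N \<and> ys ! 0 = X 0 \<omega> \<and>
           (\<forall>i \<le> N. l (ys ! i) = l (X i \<omega>))
           \<longrightarrow> ys ! Suc s = X (Suc s) \<omega>)}"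
      then have w: "\<omega> \<in> space M" and b: "\<And>N. N > s \<Longrightarrow> \<exists>ys. badw s (\<lambda>i. X i \<omega>) N ys"
        unfolding badw_def by auto
      show "\<omega> \<in> Z" unfolding Z_def badset_def using w b by auto
    qed
  qed
qed

end



theorem theorem2:
  fixes V :: "'v set" and E :: "('v \<times> 'v) set" and l :: "'v \<Rightarrow> 'c" and Phi :: "'c set"
    and M :: "'w measure" and P :: "'v \<Rightarrow> 'v \<Rightarrow> real" and X :: "nat \<Rightarrow> 'w \<Rightarrow> 'v"
  assumes "weak_model V E l Phi"
    and "strongly_connected V E"
    and "trackable V E l Phi"
    and "markov_chain M V P X"
    and "\<forall>i\<in>V. \<forall>j\<in>V. P i j > 0 \<longleftrightarrow> (i, j) \<in> E"
  shows "AE \<omega> in M. \<forall>s. \<exists>N > s. \<forall>ys.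
           is_walk V E ys \<and> length ys = Suc N \<and> ys ! 0 = X 0 \<omega> \<and>
           (\<forall>i \<le> N. l (ys ! i) = l (X i \<omega>))
           \<longrightarrow> ys ! Suc s = X (Suc s) \<omega>"
proof -
  interpret MC V E l Phi M P X
    by unfold_locales (use assms in auto)
  show ?thesis by (subst AE_all_countable) (use AE_s in blast)
qed

end
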